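(* Let $G=(V,E)$ be a connected simple finite graph with at least two vertices and let $p\in(0,\infty)$. There exists $f:V\to[0,\infty)$ with ${\rm Var}_p f>0$ such that $$\frac{{\rm Var}_p M_Gf}{{\rm Var}_p f}=\mathbf{C}_{G,p}.$$
   Context: For a finite connected graph $G=(V,E)$ with graph distance $d_G$ and $f:V\to\mathbb{R}$, $M_Gf(v)=\sup_{r\geq 0}\frac{1}{|B(v,r)|}\sum_{u\in B(v,r)}|f(u)|$, where $B(v,r)=\{u\in V: d_G(u,v)\le r\}$. For $g:V\to\mathbb{R}$ and $p>0$, ${\rm Var}_p g=\left(\sum_{\{v_1,v_2\}\in E}|g(v_1)-g(v_2)|^p\right)^{1/p}$, and $\mathbf{C}_{G,p}=\sup\{{\rm Var}_pM_Gf/{\rm Var}_pf:\ f:V\to\mathbb{R},\ {\rm Var}_pf>0\}$. *)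

theory Defs
  imports "HOL-Analysis.Analysis" "HOL-Library.Extended_Real"
begin

definition simple_graph :: "'a set \<Rightarrow> 'a set set \<Rightarrow> bool" where
  "simple_graph V E \<longleftrightarrow> finite V \<and> (\<forall>e\<in>E. e \<subseteq> V \<and> card e = 2)"

definition adj_rel :: "'a set set \<Rightarrow> ('a \<times> 'a) set" where
  "adj_rel E = {(x, y). {x, y} \<in> E}"

definition connected_graph :: "'a set \<Rightarrow> 'a set set \<Rightarrow> bool" where
  "connected_graph V E \<longleftrightarrow> (\<forall>u\<in>V. \<forall>v\<in>V. (u, v) \<in> (adj_rel E)\<^sup>*)"

definition gdist :: "'a set set \<Rightarrow> 'a \<Rightarrow> 'a \<Rightarrow> nat" where
  "gdist E u v = (LEAST n. (u, v) \<in> (adj_rel E) ^^ n)"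

definition gball :: "'a set \<Rightarrow> 'a set set \<Rightarrow> 'a \<Rightarrow> real \<Rightarrow> 'a set" where
  "gball V E v r = {u \<in> V. real (gdist E u v) \<le> r}"

definition maxfun :: "'a set \<Rightarrow> 'a set set \<Rightarrow> ('a \<Rightarrow> real) \<Rightarrow> 'a \<Rightarrow> real" where
  "maxfun V E f v = Sup {(\<Sum>u\<in>gball V E v r. \<bar>f u\<bar>) / real (card (gball V E v r)) | r. r \<ge> 0}"

text \<open>p-variation: sum over edges {v1,v2} of |g v1 - g v2|^p, written as half the sum over
  ordered pairs (v1,v2) with {v1,v2} an edge (each edge counted twice), then the 1/p-th power.\<close>
definition Varp :: "'a set set \<Rightarrow> real \<Rightarrow> ('a \<Rightarrow> real) \<Rightarrow> real" where
  "Varp E p g = ((\<Sum>(u, v)\<in>adj_rel E. \<bar>g u - g v\<bar> powr p) / 2) powr (1 / p)"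

text \<open>The best constant C_{G,p}, as an extended real (a priori it could be infinite).\<close>
definition Cconst :: "'a set \<Rightarrow> 'a set set \<Rightarrow> real \<Rightarrow> ereal" where
  "Cconst V E p = (SUP f \<in> {f :: 'a \<Rightarrow> real. Varp E p f > 0}.
       ereal (Varp E p (maxfun V E f) / Varp E p f))"

end

theory Submission
  imports Defs
begin

definition SS :: "'a set set \<Rightarrow> real \<Rightarrow> ('a \<Rightarrow> real) \<Rightarrow> real" where
  "SS E p g = (\<Sum>(u, v)\<in>adj_rel E. \<bar>g u - g v\<bar> powr p)"

lemma Varp_SS: "Varp E p g = (SS E p g / 2) powr (1 / p)"
  by (simp add: Varp_def SS_def)

lemma adj_sub:
  assumes "simple_graph V E"
  shows "adj_rel E \<subseteq> V \<times> V"
  using assms unfolding simple_graph_def adj_rel_def by auto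

lemma adj_finite:
  assumes "simple_graph V E"
  shows "finite (adj_rel E)"
  using adj_sub[OF assms] assms unfolding simple_graph_def
  by (meson finite_SigmaI finite_subset)

lemma SS_nonneg: "SS E p g \<ge> 0"
  unfolding SS_def by (auto intro!: sum_nonneg)

lemma Varp_nonneg: "Varp E p g \<ge> 0"
  by (simp add: Varp_def)

lemma Varp_pos_iff: "Varp E p g > 0 \<longleftrightarrow> SS E p g > 0"
  using SS_nonneg[of E p g] unfolding Varp_SS by auto

lemma SS_cong:
  assumes "simple_graph V E" "\<forall>x\<in>V. f x = g x"
  shows "SS E p f = SS E p g"
  unfolding SS_def using adj_sub[OF assms(1)] assms(2)
  by (intro sum.cong) auto

lemma gball_sub: "gball V E v r \<subseteq> V"
  unfolding gball_def by auto

lemma gdist_refl: "gdist E u u = 0"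
  unfolding gdist_def by (rule Least_eq_0) simp

lemma gball_center: "v \<in> V \<Longrightarrow> r \<ge> 0 \<Longrightarrow> v \<in> gball V E v r"
  unfolding gball_def by (simp add: gdist_refl)

lemma maxfun_cong:
  assumes "\<forall>x\<in>V. f x = g x"
  shows "maxfun V E f v = maxfun V E g v"
proof -
  have "\<And>r. (\<Sum>u\<in>gball V E v r. \<bar>f u\<bar>) = (\<Sum>u\<in>gball V E v r. \<bar>g u\<bar>)"
    using assms by (intro sum.cong) (auto simp: gball_def)
  then show ?thesis unfolding maxfun_def by simp
qed

definition avg :: "('a \<Rightarrow> real) \<Rightarrow> 'a set \<Rightarrow> real" where
  "avg f B = (\<Sum>u\<in>B. \<bar>f u\<bar>) / real (card B)"

definition Balls :: "'a set \<Rightarrow> 'a set set \<Rightarrow> 'a \<Rightarrow> 'a set set" where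
  "Balls V E v = (\<lambda>r. gball V E v r) ` {0..}"

lemma Balls_finite: "finite V \<Longrightarrow> finite (Balls V E v)"
  unfolding Balls_def using gball_sub
  by (metis (no_types, lifting) Pow_iff finite_Pow_iff finite_subset image_subsetI)

lemma Balls_ne: "Balls V E v \<noteq> {}"
  unfolding Balls_def by auto

lemma maxfun_Max:
  assumes "finite V"
  shows "maxfun V E f v = Max ((\<lambda>B. avg f B) ` Balls V E v)"
proof -
  have "{(\<Sum>u\<in>gball V E v r. \<bar>f u\<bar>) / real (card (gball V E v r)) | r. r \<ge> 0}
      = (\<lambda>B. avg f B) ` Balls V E v"
    unfolding Balls_def avg_def by auto
  then show ?thesis unfolding maxfun_def
    using Balls_finite[OF assms, of E v] Balls_ne[of V E v]
    by (simp add: cSup_eq_Max)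
qed


lemma Balls_mem: "B \<in> Balls V E v \<Longrightarrow> \<exists>r\<ge>0. B = gball V E v r"
  unfolding Balls_def by auto

lemma maxfun_affine:
  assumes "finite V" "v \<in> V" "l > 0" "\<forall>x\<in>V. f x \<ge> 0"
    "\<forall>x\<in>V. g x = (f x - m) / l" "\<forall>x\<in>V. f x \<ge> m" 
  shows "maxfun V E g v = (maxfun V E f v - m) / l"
proof -
  have avg_eq: "avg g B = (avg f B - m) / l" if B: "B \<in> Balls V E v" for B
  proof -
    obtain r where r: "r \<ge> 0" "B = gball V E v r" using Balls_mem[OF B] by blast
    have BV: "B \<subseteq> V" using r(2) gball_sub[of V E _ r] by simp
    have fin: "finite B" using BV assms(1) finite_subset by blast
    have "v \<in> B" using r gball_center[of v V r E] assms(2) by simp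
    then have cpos: "card B > 0" using fin card_gt_0_iff by blast
    have gu: "\<bar>g u\<bar> = (f u - m) / l" if "u \<in> B" for u
    proof -
      have "u \<in> V" using that BV by blast
      then have "g u = (f u - m) / l" "f u - m \<ge> 0" using assms(5,6) by auto
      then show ?thesis using assms(3) by simp
    qed
    have fu: "\<bar>f u\<bar> = f u" if "u \<in> B" for u
      using that BV assms(4) by auto
    have "(\<Sum>u\<in>B. \<bar>g u\<bar>) = (\<Sum>u\<in>B. (f u - m) / l)"
      using gu by (rule sum.cong[OF refl])
    also have "\<dots> = (\<Sum>u\<in>B. (f u - m)) / l"
      by (rule sum_divide_distrib[symmetric])
    also have "(\<Sum>u\<in>B. (f u - m)) = (\<Sum>u\<in>B. f u) - real (card B) * m"
      by (simp add: sum_subtractf)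
    also have "(\<Sum>u\<in>B. f u) = (\<Sum>u\<in>B. \<bar>f u\<bar>)"
      using fu by (intro sum.cong) auto
    finally have "(\<Sum>u\<in>B. \<bar>g u\<bar>) = ((\<Sum>u\<in>B. \<bar>f u\<bar>) - real (card B) * m) / l" .
    then show ?thesis unfolding avg_def using cpos assms(3)
      by (simp add: field_simps)
  qed
  have mono: "mono (\<lambda>t. (t - m) / l)"
    using assms(3) by (auto simp: mono_def divide_right_mono)
  have "maxfun V E g v = Max ((\<lambda>B. avg g B) ` Balls V E v)"
    by (rule maxfun_Max[OF assms(1)])
  also have "\<dots> = Max ((\<lambda>t. (t - m) / l) ` ((\<lambda>B. avg f B) ` Balls V E v))"
    unfolding image_image by (intro arg_cong[where f=Max] image_cong) (auto simp: avg_eq)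
  also have "\<dots> = (Max ((\<lambda>B. avg f B) ` Balls V E v) - m) / l"
    using mono_Max_commute[OF mono, of "(\<lambda>B. avg f B) ` Balls V E v"]
      Balls_finite[OF assms(1), of E v] Balls_ne[of V E v] by simp
  also have "\<dots> = (maxfun V E f v - m) / l"
    using maxfun_Max[OF assms(1)] by simp
  finally show ?thesis .
qed

lemma SS_scale:
  assumes "\<forall>(u, v)\<in>adj_rel E. h' u - h' v = (h u - h v) / l" "l > 0"
  shows "SS E p h' = SS E p h / l powr p"
proof -
  have "SS E p h' = (\<Sum>(u, v)\<in>adj_rel E. \<bar>h u - h v\<bar> powr p / l powr p)"
    unfolding SS_def
  proof (intro sum.cong refl)
    fix x assume "x \<in> adj_rel E"
    then obtain a b where x: "x = (a, b)" "(a, b) \<in> adj_rel E" by (cases x) auto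
    then have "h' a - h' b = (h a - h b) / l" using assms(1) by auto
    then show "(case x of (u, v) \<Rightarrow> \<bar>h' u - h' v\<bar> powr p) =
        (case x of (u, v) \<Rightarrow> \<bar>h u - h v\<bar> powr p / l powr p)"
      using x assms(2) by (simp add: powr_divide)
  qed
  also have "\<dots> = SS E p h / l powr p"
    unfolding SS_def by (simp add: sum_divide_distrib case_prod_unfold)
  finally show ?thesis .
qed

lemma Varp_scale:
  assumes "\<forall>(u, v)\<in>adj_rel E. h' u - h' v = (h u - h v) / l" "l > 0" "p > 0"
  shows "Varp E p h' = Varp E p h / l"
proof -
  have "Varp E p h' = ((SS E p h / 2) / l powr p) powr (1 / p)"
    unfolding Varp_SS SS_scale[OF assms(1,2)] by (simp add: ac_simps)
  also have "\<dots> = (SS E p h / 2) powr (1 / p) / (l powr p) powr (1 / p)"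
    by (rule powr_divide)
  also have "(l powr p) powr (1 / p) = l"
    using assms by (simp add: powr_powr)
  finally show ?thesis unfolding Varp_SS .
qed

lemma cont_Max:
  fixes \<phi> :: "('a \<Rightarrow> real) \<Rightarrow> 'b \<Rightarrow> real"
  assumes "finite Bs" "Bs \<noteq> {}" "\<forall>B\<in>Bs. continuous_on S (\<lambda>f. \<phi> f B)"
  shows "continuous_on S (\<lambda>f. Max ((\<phi> f) ` Bs))"
  using assms
proof (induction Bs rule: finite_ne_induct)
  case (singleton x)
  then show ?case by simp
next
  case (insert x F)
  have "continuous_on S (\<lambda>f. max (\<phi> f x) (Max ((\<phi> f) ` F)))"
    using insert by (intro continuous_on_max) auto
  then show ?case using insert by simp
qed

lemma avg_cont: "continuous_on UNIV (\<lambda>f::'a \<Rightarrow> real. avg f B)"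
  unfolding avg_def divide_inverse
  by (intro continuous_intros continuous_on_product_coordinates)

lemma maxfun_cont: "finite V \<Longrightarrow> continuous_on UNIV (\<lambda>f. maxfun V E f v)"
  unfolding maxfun_Max
  by (intro cont_Max Balls_finite Balls_ne ballI avg_cont)

lemma SS_cont:
  assumes "p > 0" "\<And>u. continuous_on UNIV (\<lambda>f. H f u)"
  shows "continuous_on UNIV (\<lambda>f. SS E p (H f))"
  unfolding SS_def
proof (intro continuous_on_sum)
  fix x :: "'a \<times> 'a"
  obtain a b where x: "x = (a, b)" by (cases x)
  have "continuous_on UNIV (\<lambda>f. \<bar>H f a - H f b\<bar> powr p)"
    using assms by (intro continuous_on_powr' continuous_intros) auto
  then show "continuous_on UNIV (\<lambda>f. case x of (u, v) \<Rightarrow> \<bar>H f u - H f v\<bar> powr p)"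
    using x by simp
qed

lemma SS_zero_const:
  assumes "simple_graph V E" "connected_graph V E" "SS E p h = 0" "u \<in> V" "v \<in> V"
  shows "h u = h v"
proof -
  have iff: "(\<Sum>x\<in>adj_rel E. (\<lambda>(u, v). \<bar>h u - h v\<bar> powr p) x) = 0 \<longleftrightarrow>
      (\<forall>x\<in>adj_rel E. (\<lambda>(u, v). \<bar>h u - h v\<bar> powr p) x = 0)"
    by (rule sum_nonneg_eq_0_iff[OF adj_finite[OF assms(1)]]) (simp add: case_prod_unfold)
  have all0: "\<forall>x\<in>adj_rel E. (\<lambda>(u, v). \<bar>h u - h v\<bar> powr p) x = 0"
    using iff assms(3) unfolding SS_def by simp
  have edge: "h a = h b" if "(a, b) \<in> adj_rel E" for a b
    using bspec[OF all0 that] by simp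
  have "(u, v) \<in> (adj_rel E)\<^sup>*" using assms(2,4,5) unfolding connected_graph_def by blast
  then show ?thesis
  proof (induction rule: rtrancl_induct)
    case base
    then show ?case by simp
  next
    case (step y z)
    then show ?case using edge[of y z] by simp
  qed
qed

lemma path_bound:
  assumes "(w, u) \<in> R ^^ n" "\<forall>(a, b)\<in>R. \<bar>g a - g b\<bar> \<le> 1"
  shows "\<bar>g u - g w\<bar> \<le> real n"
  using assms(1)
proof (induction n arbitrary: u)
  case 0
  then show ?case by simp
next
  case (Suc n)
  from Suc.prems obtain y where y: "(w, y) \<in> R ^^ n" "(y, u) \<in> R" by (rule relpow_Suc_E)
  have "\<bar>g y - g u\<bar> \<le> 1" using bspec[OF assms(2) y(2)] by simp
  moreover have "\<bar>g y - g w\<bar> \<le> real n" using Suc.IH[OF y(1)] .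
  ultimately show ?case by simp
qed

lemma edge_bound:
  assumes "simple_graph V E" "SS E p g = 1" "(a, b) \<in> adj_rel E" "p > 0"
  shows "\<bar>g a - g b\<bar> \<le> 1"
proof -
  have "(\<lambda>(u, v). \<bar>g u - g v\<bar> powr p) (a, b) \<le> SS E p g"
    unfolding SS_def using assms(3) adj_finite[OF assms(1)]
    by (intro member_le_sum) auto
  then have le: "\<bar>g a - g b\<bar> powr p \<le> 1" using assms(2) by simp
  show ?thesis
  proof (rule ccontr)
    assume "\<not> ?thesis"
    then have "1 < \<bar>g a - g b\<bar> powr p" using assms(4) by (intro gr_one_powr) auto
    then show False using le by simp
  qed
qed


lemma two_vertices:
  assumes "finite V" "card V \<ge> 2"
  obtains x y where "x \<in> V" "y \<in> V" "x \<noteq> y"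
proof -
  have "\<not> card V \<le> Suc 0" using assms(2) by simp
  then show ?thesis using that card_le_Suc0_iff_eq[OF assms(1)] by blast
qed

lemma maxfun_const:
  assumes "finite V" "u \<in> V" "\<forall>x\<in>V. \<bar>f x\<bar> = c"
  shows "maxfun V E f u = c"
proof -
  have "avg f B = c" if B: "B \<in> Balls V E u" for B
  proof -
    obtain r where r: "r \<ge> 0" "B = gball V E u r" using Balls_mem[OF B] by blast
    have BV: "B \<subseteq> V" using r(2) gball_sub[of V E _ r] by simp
    have fin: "finite B" using BV assms(1) finite_subset by blast
    have "u \<in> B" using r gball_center[of u V r E] assms(2) by simp
    then have cpos: "card B > 0" using fin card_gt_0_iff by blast
    have "(\<Sum>x\<in>B. \<bar>f x\<bar>) = (\<Sum>x\<in>B. c)" using BV assms(3) by (intro sum.cong) auto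
    then show ?thesis unfolding avg_def using cpos by simp
  qed
  then have "(\<lambda>B. avg f B) ` Balls V E u = {c}" using Balls_ne[of V E u] by auto
  then show ?thesis unfolding maxfun_Max[OF assms(1)] by simp
qed

theorem proposition4p1:
  fixes V :: "'a set" and E :: "'a set set" and p :: real
  assumes "simple_graph V E"
    and "connected_graph V E"
    and "card V \<ge> 2"
    and "p > 0"
  shows "\<exists>f :: 'a \<Rightarrow> real. (\<forall>v\<in>V. f v \<ge> 0) \<and> Varp E p f > 0 \<and>
           ereal (Varp E p (maxfun V E f) / Varp E p f) = Cconst V E p"
proof -
  let ?A = "adj_rel E"
  let ?R = "\<lambda>f. Varp E p (maxfun V E f) / Varp E p f"
  have fin: "finite V" using assms(1) unfolding simple_graph_def by blast
  have finA: "finite ?A" using adj_finite[OF assms(1)] .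
  have subA: "?A \<subseteq> V \<times> V" using adj_sub[OF assms(1)] .
  obtain a b where ab: "(a, b) \<in> ?A" "a \<noteq> b"
  proof -
    obtain x y where xy: "x \<in> V" "y \<in> V" "x \<noteq> y" using two_vertices[OF fin assms(3)] by blast
    have "(x, y) \<in> ?A\<^sup>*" using assms(2) xy unfolding connected_graph_def by blast
    then obtain z where z: "(x, z) \<in> ?A"
      using xy(3) by (cases rule: converse_rtranclE) auto
    then have "{x, z} \<in> E" unfolding adj_rel_def by simp
    then have "card {x, z} = 2" using assms(1) unfolding simple_graph_def by blast
    then have "x \<noteq> z" by auto
    then show ?thesis using that z by blast
  qed
  define N where "N = Max ((\<lambda>(w, u). gdist E w u) ` (V \<times> V))"
  have gd: "(w, u) \<in> ?A ^^ (gdist E w u) \<and> gdist E w u \<le> N" if "w \<in> V" "u \<in> V" for w u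
  proof
    have "(w, u) \<in> ?A\<^sup>*" using assms(2) that unfolding connected_graph_def by blast
    then obtain n where "(w, u) \<in> ?A ^^ n" using rtrancl_power by blast
    then show "(w, u) \<in> ?A ^^ (gdist E w u)" unfolding gdist_def by (rule LeastI)
    show "gdist E w u \<le> N" unfolding N_def using that fin
      by (intro Max_ge) auto
  qed
  define Box where "Box = Pi UNIV (\<lambda>x. if x \<in> V then {0..real N} else {0::real})"
  define K where "K = Box \<inter> {f. SS E p f = 1}"
  have "compactin (product_topology (\<lambda>i. euclidean) UNIV)
      (PiE UNIV (\<lambda>x. if x \<in> V then {0..real N} else {0::real}))"
    by (subst compactin_PiE) auto
  then have cBox: "compact Box"
    unfolding Box_def euclidean_product_topology PiE_UNIV_domain by simp
  have "closed {f. SS E p f = 1}"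
    using SS_cont[OF assms(4), of "\<lambda>f. f" E]
    by (intro closed_Collect_eq) (auto intro: continuous_on_const)
  then have cK: "compact K" unfolding K_def using cBox by (rule compact_Int_closed[rotated])
  have norm: "\<exists>g\<in>K. ?R g = ?R f" if f0: "\<forall>x\<in>V. f x \<ge> 0" and fpos: "SS E p f > 0" for f
  proof -
    have Vne: "V \<noteq> {}" using ab subA by blast
    define m where "m = Min (f ` V)"
    have "m \<in> f ` V" unfolding m_def using fin Vne by (intro Min_in) auto
    then obtain w where w: "w \<in> V" "f w = m" by blast
    have fm: "\<forall>x\<in>V. f x \<ge> m" unfolding m_def using fin by auto
    define l where "l = SS E p f powr (1 / p)"
    have lpos: "l > 0" unfolding l_def using fpos by simp
    have lp: "l powr p = SS E p f" unfolding l_def using fpos assms(4) by (simp add: powr_powr)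
    define g where "g = (\<lambda>x. if x \<in> V then (f x - m) / l else 0)"
    have gV: "\<forall>x\<in>V. g x = (f x - m) / l" unfolding g_def by simp
    have dg: "\<forall>(u, v)\<in>?A. g u - g v = (f u - f v) / l"
      using subA unfolding g_def by (auto simp: diff_divide_distrib)
    have SSg: "SS E p g = 1" using SS_scale[OF dg lpos] lp fpos by simp
    have Vg: "Varp E p g = Varp E p f / l" using Varp_scale[OF dg lpos assms(4)] .
    have Mg: "maxfun V E g u = (maxfun V E f u - m) / l" if "u \<in> V" for u
      using maxfun_affine[OF fin that lpos f0 gV fm] .
    have dMg: "\<forall>(u, v)\<in>?A. maxfun V E g u - maxfun V E g v
        = (maxfun V E f u - maxfun V E f v) / l"
      using subA by (auto simp: Mg diff_divide_distrib)
    have VMg: "Varp E p (maxfun V E g) = Varp E p (maxfun V E f) / l"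
      using Varp_scale[OF dMg lpos assms(4)] .
    have edges: "\<forall>(x, y)\<in>?A. \<bar>g x - g y\<bar> \<le> 1"
      using edge_bound[OF assms(1) SSg _ assms(4)] by auto
    have "g \<in> Box"
      unfolding Box_def
    proof (intro Pi_I)
      fix x
      show "g x \<in> (if x \<in> V then {0..real N} else {0})"
      proof (cases "x \<in> V")
        case True
        have "g x \<ge> 0" using True gV fm lpos by simp
        moreover have "\<bar>g x - g w\<bar> \<le> real (gdist E w x)"
          using path_bound[OF conjunct1[OF gd[OF w(1) True]] edges] .
        moreover have "g w = 0" using gV w by simp
        moreover have "gdist E w x \<le> N" using gd[OF w(1) True] by blast
        ultimately show ?thesis using True by auto
      qed (simp add: g_def)
    qed
    then have "g \<in> K" unfolding K_def using SSg by simp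
    moreover have "?R g = ?R f" unfolding Vg VMg using lpos by simp
    ultimately show ?thesis by blast
  qed
  define f0 where "f0 = (\<lambda>x. if x = a then 1 else (0::real))"
  have "(\<lambda>(u, v). \<bar>f0 u - f0 v\<bar> powr p) (a, b) \<le> SS E p f0"
    unfolding SS_def using ab finA by (intro member_le_sum) auto
  then have "SS E p f0 > 0" using ab unfolding f0_def by simp
  moreover have "\<forall>x\<in>V. f0 x \<ge> 0" unfolding f0_def by simp
  ultimately obtain g0 where "g0 \<in> K" using norm[of f0] by blast
  then have Kne: "K \<noteq> {}" by blast
  have Tcont: "continuous_on K (\<lambda>f. SS E p (maxfun V E f))"
    using SS_cont[OF assms(4), of "\<lambda>f. maxfun V E f" E] maxfun_cont[OF fin]
    by (auto intro: continuous_on_subset)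
  obtain fs where fs: "fs \<in> K" "\<forall>g\<in>K. SS E p (maxfun V E g) \<le> SS E p (maxfun V E fs)"
    using continuous_attains_sup[OF cK Kne Tcont] by blast
  have Rnonneg: "?R g \<ge> 0" for g by (simp add: Varp_nonneg)
  have bestK: "?R g \<le> ?R fs" if "g \<in> K" for g
  proof -
    have "Varp E p g = Varp E p fs" using that fs(1) unfolding K_def Varp_SS by simp
    moreover have "Varp E p (maxfun V E g) \<le> Varp E p (maxfun V E fs)"
      unfolding Varp_SS using fs(2) that assms(4) SS_nonneg
      by (intro powr_mono2) auto
    ultimately show ?thesis by (simp add: divide_right_mono Varp_nonneg)
  qed
  have best: "?R f \<le> ?R fs" if fpos: "Varp E p f > 0" for f
  proof -
    define h where "h = (\<lambda>x. \<bar>f x\<bar>)"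
    have Mh: "maxfun V E h = maxfun V E f" unfolding h_def maxfun_def by simp
    show ?thesis
    proof (cases "SS E p h > 0")
      case True
      then obtain g where g: "g \<in> K" "?R g = ?R h" using norm[of h] unfolding h_def by auto
      have "SS E p h \<le> SS E p f" unfolding SS_def h_def
        using assms(4) by (intro sum_mono) (auto intro!: powr_mono2 abs_triangle_ineq3)
      then have "Varp E p h \<le> Varp E p f" unfolding Varp_SS using assms(4) SS_nonneg
        by (intro powr_mono2) auto
      moreover have "Varp E p h > 0" using True Varp_pos_iff by blast
      ultimately have "?R f \<le> ?R h" unfolding Mh
        by (intro divide_left_mono Varp_nonneg) auto
      also have "\<dots> = ?R g" using g by simp
      also have "\<dots> \<le> ?R fs" using bestK g by blast
      finally show ?thesis .
    next
      case False
      then have "SS E p h = 0" using SS_nonneg[of E p h] by linarith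
      then have hc: "h x = h a" if "x \<in> V" for x
        using SS_zero_const[OF assms(1,2)] that ab subA by blast
      have Mc: "maxfun V E f x = h a" if "x \<in> V" for x
        using maxfun_const[OF fin that, of f "h a"] hc unfolding h_def by auto
      have "SS E p (maxfun V E f) = 0" unfolding SS_def
        using subA by (intro sum.neutral) (auto simp: Mc)
      then have "?R f = 0" by (simp add: Varp_SS)
      then show ?thesis using Rnonneg[of fs] by auto
    qed
  qed
  have fsnn: "\<forall>v\<in>V. fs v \<ge> 0"
  proof
    fix v assume "v \<in> V"
    have "fs v \<in> (if v \<in> V then {0..real N} else {0})"
    proof -
      have "fs \<in> Box" using fs(1) unfolding K_def by blast
      then show ?thesis unfolding Box_def by (rule Pi_mem[OF _ UNIV_I])
    qed
    then show "fs v \<ge> 0" using \<open>v \<in> V\<close> by simp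
  qed
  have fspos: "Varp E p fs > 0" using fs(1) unfolding K_def Varp_pos_iff by simp
  have CC: "Cconst V E p = ereal (?R fs)"
    unfolding Cconst_def
  proof (rule antisym)
    show "(SUP f\<in>{f. Varp E p f > 0}. ereal (?R f)) \<le> ereal (?R fs)"
      using best by (intro SUP_least) auto
    show "ereal (?R fs) \<le> (SUP f\<in>{f. Varp E p f > 0}. ereal (?R f))"
      using fspos by (intro SUP_upper) auto
  qed
  show ?thesis
    by (rule exI[of _ fs]) (use fsnn fspos CC in simp)
qed

end
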